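(* Let $\gamma_a,\gamma_s>0$, $\sigma_B>0$, $q>0$, $\varepsilon_a>2$, and let $\beta_s$ be the piecewise linear coalbedo described in the context. Let $(T_a,T_s)$ be the maximal solution, defined on $[0,\tau^+)$, of \[ \begin{cases} \gamma_a T_a'=\varepsilon_a\sigma_B|T_s|^3T_s-2\varepsilon_a\sigma_B|T_a|^3T_a,\\ \gamma_s T_s'=-\sigma_B|T_s|^3T_s+\varepsilon_a\sigma_B|T_a|^3T_a+q\beta_s(T_s),\\ T_a(0)=T_a^{(0)}\ge0,\quad T_s(0)=T_s^{(0)}\ge0. \end{cases} \] Let \[ \mathcal E=\Big\{(T_a,T_s)\in[0,\infty)^2:\ \sigma_B T_s^4-q\beta_s(T_s)<\varepsilon_a\sigma_B T_a^4<\tfrac12\varepsilon_a\sigma_B T_s^4\Big\}, \] and let $\mu_*$ be the unique number in $(2^{1/4},\varepsilon_a^{1/4})$ satisfying $\frac{\gamma_s}{\gamma_a}\mu_*=\frac{\varepsilon_a-\mu_*^4}{\varepsilon_a(\mu_*^4-2)}$. Let $\tau_0\in[0,\tau^+)$ be any time such that $(T_a(\tau_0),T_s(\tau_0))\in\mathcal E$. Then there exists $\mu\in(2^{1/4},\mu_* )$ such that $T_s(t)\ge\mu T_a(t)$ for all $t\in[\tau_0,\tau^+)$.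
   Context: The coalbedo is $\beta_s(T)=\beta_{s,-}$ for $T\le T_{s,-}$, $\beta_s(T)=\beta_{s,-}+(\beta_{s,+}-\beta_{s,-})\frac{T-T_{s,-}}{T_{s,+}-T_{s,-}}$ for $T\in[T_{s,-},T_{s,+}]$, and $\beta_s(T)=\beta_{s,+}$ for $T\ge T_{s,+}$, where $T_{s,+}>T_{s,-}>0$ and $\beta_{s,+}>\beta_{s,-}>0$. *)

theory Defs
  imports Complex_Main "HOL-Library.Extended_Real"
begin

text \<open>Piecewise linear coalbedo with parameters Tm = T_{s,-}, Tp = T_{s,+},
  bm = beta_{s,-}, bp = beta_{s,+}.\<close>
definition coalbedo :: "real \<Rightarrow> real \<Rightarrow> real \<Rightarrow> real \<Rightarrow> real \<Rightarrow> real" where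
  "coalbedo Tm Tp bm bp T =
     (if T \<le> Tm then bm
      else if T \<le> Tp then bm + (bp - bm) * (T - Tm) / (Tp - Tm)
      else bp)"

definition is_solution ::
  "real \<Rightarrow> real \<Rightarrow> real \<Rightarrow> real \<Rightarrow> real \<Rightarrow> (real \<Rightarrow> real) \<Rightarrow>
   (real \<Rightarrow> real) \<Rightarrow> (real \<Rightarrow> real) \<Rightarrow> ereal \<Rightarrow> bool" where
  "is_solution ga gs ea sB q bs Ta Ts tau \<longleftrightarrow>
     (\<forall>t. 0 \<le> t \<and> ereal t < tau \<longrightarrow>
        (Ta has_real_derivative
           ((ea * sB * \<bar>Ts t\<bar>^3 * Ts t - 2 * ea * sB * \<bar>Ta t\<bar>^3 * Ta t) / ga))
           (at t within {s. 0 \<le> s \<and> ereal s < tau}) \<and>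
        (Ts has_real_derivative
           ((- sB * \<bar>Ts t\<bar>^3 * Ts t + ea * sB * \<bar>Ta t\<bar>^3 * Ta t + q * bs (Ts t)) / gs))
           (at t within {s. 0 \<le> s \<and> ereal s < tau}))"

definition is_maximal_solution ::
  "real \<Rightarrow> real \<Rightarrow> real \<Rightarrow> real \<Rightarrow> real \<Rightarrow> (real \<Rightarrow> real) \<Rightarrow>
   (real \<Rightarrow> real) \<Rightarrow> (real \<Rightarrow> real) \<Rightarrow> ereal \<Rightarrow> bool" where
  "is_maximal_solution ga gs ea sB q bs Ta Ts tau \<longleftrightarrow>
     0 < tau \<and> is_solution ga gs ea sB q bs Ta Ts tau \<and>
     \<not> (\<exists>tau' Ta' Ts'. tau < tau' \<and> is_solution ga gs ea sB q bs Ta' Ts' tau' \<and>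
          (\<forall>t. 0 \<le> t \<and> ereal t < tau \<longrightarrow> Ta' t = Ta t \<and> Ts' t = Ts t))"

end

theory Submission
  imports Defs "HOL-Analysis.Analysis"
begin


lemma MP:
  fixes f f' :: "real \<Rightarrow> real"
  assumes ab: "a \<le> b"
    and der: "\<And>t. t \<in> {a..b} \<Longrightarrow> (f has_real_derivative f' t) (at t within {a..b})"
    and cond: "\<And>t. t \<in> {a<..b} \<Longrightarrow> f t < 0 \<Longrightarrow> f' t > 0"
    and fa: "f a \<ge> 0"
  shows "\<forall>t\<in>{a..b}. f t \<ge> 0"
proof -
  have "continuous_on {a..b} f"
    using der by (meson DERIV_continuous continuous_on_eq_continuous_within)
  then obtain m where m: "m \<in> {a..b}" "\<forall>y\<in>{a..b}. f m \<le> f y"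
    using continuous_attains_inf[of "{a..b}" f] ab by auto
  show ?thesis
  proof (cases "f m \<ge> 0")
    case True then show ?thesis using m(2) order_trans by meson
  next
    case False
    then have "m \<noteq> a" using fa by auto
    then have ma: "m \<in> {a<..b}" using m by auto
    then have "f' m > 0" using cond False by auto
    then obtain d where d: "d > 0" "\<forall>h>0. m - h \<in> {a..b} \<longrightarrow> h < d \<longrightarrow> f (m - h) < f m"
      using has_real_derivative_pos_inc_left[OF der[OF m(1)]] by blast
    define h where "h = min (d/2) (m - a)"
    have "h > 0" "h < d" "m - h \<in> {a..b}" using d ma by (auto simp: h_def)
    then have "f (m - h) < f m" using d by blast
    moreover have "f m \<le> f (m - h)" using m \<open>m - h \<in> {a..b}\<close> by blast
    ultimately show ?thesis by simp
  qed
qed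

lemma ge_at_end:
  fixes f :: "real \<Rightarrow> real"
  assumes "a < b" "continuous_on {a..b} f" "\<forall>t\<in>{a..<b}. f t \<ge> 0"
  shows "f b \<ge> 0"
proof -
  have c: "closure {a..<b} = {a..b}" using assms(1) by simp
  show ?thesis
    using continuous_ge_on_closure[of "{a..<b}" f b 0] assms c by auto
qed



lemma key:
  fixes ga gs ea M S mu mus :: real
  assumes "ga > 0" "gs > 0" "ea > 2" "2 < M" "M < S" "S < ea" "mu > 0" "mu < mus"
    "gs / ga * mus = (ea - S) / (ea * (S - 2))"
  shows "mu * ea * (M - 2) / ga \<le> (ea - M) / gs"
proof -
  have s1: "(ea - S) / (ea * (S - 2)) \<le> (ea - M) / (ea * (M - 2))"
    by (rule frac_le) (use assms in \<open>auto intro: mult_left_mono\<close>)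
  have s2: "gs / ga * mu \<le> gs / ga * mus" using assms by (intro mult_left_mono) auto
  have "gs / ga * mu \<le> (ea - M) / (ea * (M - 2))" using s1 s2 assms(9) by linarith
  then have "gs / ga * mu * (ea * (M - 2)) \<le> ea - M"
    using assms by (subst (asm) pos_le_divide_eq) auto
  moreover have "gs * (mu * ea * (M - 2) / ga) = gs / ga * mu * (ea * (M - 2))" by simp
  ultimately have "gs * (mu * ea * (M - 2) / ga) \<le> ea - M" by simp
  then show ?thesis using assms by (simp add: pos_le_divide_eq mult.commute)
qed

lemma hcond:
  fixes a x mu sB ga gs ea q \<beta> :: real
  assumes a: "a \<ge> 0" and x: "x < mu * a" and "mu > 0" "sB > 0" "ga > 0" "gs > 0" "ea > 0"
    and K: "(ea - mu^4)/gs - mu*ea*(mu^4-2)/ga \<ge> 0" and "\<beta> > 0" "q > 0"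
  shows "(- sB * \<bar>x\<bar>^3 * x + ea * sB * \<bar>a\<bar>^3 * a + q * \<beta>) / gs
           - mu * ((ea * sB * \<bar>x\<bar>^3 * x - 2 * ea * sB * \<bar>a\<bar>^3 * a) / ga) > 0"
proof -
  define X where "X = \<bar>x\<bar>^3 * x"
  define Y where "Y = a^4"
  define K where "K = (ea - mu^4)/gs - mu*ea*(mu^4-2)/ga"
  have aY: "\<bar>a\<bar>^3 * a = Y" using a by (simp add: Y_def power4_eq_xxxx power3_eq_cube)
  have XY: "X < mu^4 * Y"
  proof (cases "x \<ge> 0")
    case True
    then have "x^4 < (mu*a)^4" using x by (intro power_strict_mono) auto
    moreover have "X = x^4" using True by (simp add: X_def power4_eq_xxxx power3_eq_cube)
    moreover have "mu^4 * Y = (mu*a)^4" by (simp add: Y_def power_mult_distrib)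
    ultimately show ?thesis by simp
  next
    case False
    have "\<bar>x\<bar>^3 > 0" using False by simp
    then have "X < 0" unfolding X_def using False by (intro mult_pos_neg) auto
    moreover have "mu^4 * Y \<ge> 0" using assms by (simp add: Y_def)
    ultimately show ?thesis by linarith
  qed
  have eq: "(- sB * X + ea * sB * Y + q * \<beta>) / gs - mu * ((ea * sB * X - 2 * ea * sB * Y) / ga)
      = sB * Y * K + q * \<beta> / gs + (mu^4 * Y - X) * (sB / gs + mu * ea * sB / ga)"
    using assms by (simp add: K_def field_simps)
  have "sB * Y * K \<ge> 0" using assms K by (simp add: K_def Y_def)
  moreover have "q * \<beta> / gs > 0" using assms by simp
  moreover have "(mu^4 * Y - X) * (sB / gs + mu * ea * sB / ga) > 0"
    using XY assms by (intro mult_pos_pos add_pos_pos) auto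
  ultimately have "(- sB * X + ea * sB * Y + q * \<beta>) / gs - mu * ((ea * sB * X - 2 * ea * sB * Y) / ga) > 0"
    using eq by linarith
  then show ?thesis by (simp add: X_def aY[symmetric] mult.assoc)
qed


lemma coalbedo_pos:
  assumes "Tm < Tp" "0 < bm" "bm < bp"
  shows "coalbedo Tm Tp bm bp T > 0"
proof -
  have "T > Tm \<Longrightarrow> T \<le> Tp \<Longrightarrow> (bp - bm) * (T - Tm) / (Tp - Tm) \<ge> 0"
    using assms by simp
  then show ?thesis using assms unfolding coalbedo_def
    by (smt (verit))
qed

theorem lemmaA1:
  fixes ga gs sB q ea Tm Tp bm bp mus tau0 :: real
    and tau :: ereal
    and Ta Ts :: "real \<Rightarrow> real"
  assumes "ga > 0" and "gs > 0" and "sB > 0" and "q > 0" and "ea > 2"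
    and "0 < Tm" and "Tm < Tp" and "0 < bm" and "bm < bp"
    and sol: "is_maximal_solution ga gs ea sB q (coalbedo Tm Tp bm bp) Ta Ts tau"
    and "Ta 0 \<ge> 0" and "Ts 0 \<ge> 0"
    and mus: "root 4 2 < mus" "mus < root 4 ea"
      "gs / ga * mus = (ea - mus^4) / (ea * (mus^4 - 2))"
    and "0 \<le> tau0" and "ereal tau0 < tau"
    and E: "Ta tau0 \<ge> 0" "Ts tau0 \<ge> 0"
      "sB * Ts tau0 ^ 4 - q * coalbedo Tm Tp bm bp (Ts tau0) < ea * sB * Ta tau0 ^ 4"
      "ea * sB * Ta tau0 ^ 4 < 1/2 * ea * sB * Ts tau0 ^ 4"
  shows "\<exists>mu. root 4 2 < mu \<and> mu < mus \<and>
           (\<forall>t. tau0 \<le> t \<and> ereal t < tau \<longrightarrow> Ts t \<ge> mu * Ta t)"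
proof -
  define bs where "bs = coalbedo Tm Tp bm bp"
  define D where "D = {s. 0 \<le> s \<and> ereal s < tau}"
  define dTa where "dTa t = (ea * sB * \<bar>Ts t\<bar>^3 * Ts t - 2 * ea * sB * \<bar>Ta t\<bar>^3 * Ta t) / ga" for t
  define dTs where "dTs t = (- sB * \<bar>Ts t\<bar>^3 * Ts t + ea * sB * \<bar>Ta t\<bar>^3 * Ta t + q * bs (Ts t)) / gs" for t
  have bs_pos: "bs T > 0" for T using coalbedo_pos assms unfolding bs_def by blast
  have bs0: "bs 0 = bm" using assms unfolding bs_def coalbedo_def by simp
  have isol: "is_solution ga gs ea sB q bs Ta Ts tau" using sol unfolding is_maximal_solution_def bs_def by blast
  have derD: "(Ta has_real_derivative dTa t) (at t within D) \<and> (Ts has_real_derivative dTs t) (at t within D)"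
    if "0 \<le> t" "ereal t < tau" for t
    using isol that unfolding is_solution_def dTa_def dTs_def D_def by blast
  have sub: "{a..b} \<subseteq> D" if "0 \<le> a" "ereal b < tau" for a b
    using that unfolding D_def by (auto, meson ereal_less_eq(3) le_less_trans)
  have derI: "(Ta has_real_derivative dTa t) (at t within {a..b}) \<and> (Ts has_real_derivative dTs t) (at t within {a..b})"
    if "0 \<le> a" "ereal b < tau" "t \<in> {a..b}" for a b t
  proof -
    have "{a..b} \<subseteq> D" using sub that by blast
    moreover have "0 \<le> t" "ereal t < tau" using that \<open>{a..b} \<subseteq> D\<close> unfolding D_def by auto
    ultimately show ?thesis using derD DERIV_subset by blast
  qed
  have contI: "continuous_on {a..b} Ta \<and> continuous_on {a..b} Ts"
    if "0 \<le> a" "ereal b < tau" for a b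
    using derI[OF that] by (meson DERIV_continuous continuous_on_eq_continuous_within)
  have r2: "root 4 2 ^ 4 = 2" by (simp add: real_root_pow_pos2)
  have r2pos: "root 4 2 > 0" by simp
  obtain m where m: "root 4 2 < m" "m \<le> mus" "Ta tau0 > 0 \<Longrightarrow> m \<le> Ts tau0 / Ta tau0"
  proof (cases "Ta tau0 > 0")
    case True
    define \<rho> where "\<rho> = Ts tau0 / Ta tau0"
    have "2 * Ta tau0 ^ 4 < Ts tau0 ^ 4" using E(4) assms by simp
    then have "\<rho>^4 > 2" using True by (simp add: \<rho>_def power_divide pos_less_divide_eq)
    then have "root 4 2 ^ 4 < \<rho>^4" using r2 by simp
    moreover have "\<rho> \<ge> 0" using True E by (simp add: \<rho>_def)
    ultimately have "root 4 2 < \<rho>" using power_less_imp_less_base by blast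
    then show ?thesis using that[of "min mus \<rho>"] mus(1) by (auto simp: \<rho>_def)
  next
    case False
    then show ?thesis using that[of mus] mus(1) by auto
  qed
  define mu where "mu = (root 4 2 + m) / 2"
  have mu1: "root 4 2 < mu" "mu < mus" using m by (auto simp: mu_def)
  have mupos: "mu > 0" using mu1 r2pos by linarith
  have h0: "Ts tau0 - mu * Ta tau0 \<ge> 0"
  proof (cases "Ta tau0 > 0")
    case True
    have "mu < m" using m(1) unfolding mu_def by simp
    then have "mu < Ts tau0 / Ta tau0" using m(3) True by linarith
    then show ?thesis using True by (simp add: pos_less_divide_eq)
  next
    case False
    then show ?thesis using E by auto
  qed
  have M2: "2 < mu^4" using mu1 r2 r2pos by (metis power_strict_mono less_imp_le zero_less_numeral)
  have MS: "mu^4 < mus^4" using mu1 mupos by (intro power_strict_mono) auto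
  have Sea: "mus^4 < ea"
  proof -
    have "mus^4 < root 4 ea ^ 4" using mus(2) mu1 mupos by (intro power_strict_mono) auto
    then show ?thesis using assms by (simp add: real_root_pow_pos2)
  qed
  have K: "(ea - mu^4)/gs - mu*ea*(mu^4-2)/ga \<ge> 0"
    using key[of ga gs ea "mu^4" "mus^4" mu mus] assms M2 MS Sea mupos mu1 mus(3) by auto
  have condTa: "dTa t > 0" if "Ta t < 0" "Ts t \<ge> 0" for t
  proof -
    have "\<bar>Ts t\<bar>^3 * Ts t \<ge> 0" using that by simp
    moreover have "\<bar>Ta t\<bar>^3 * Ta t < 0" using that by (intro mult_pos_neg) auto
    ultimately have "ea * sB * (\<bar>Ts t\<bar>^3 * Ts t) - 2 * ea * sB * (\<bar>Ta t\<bar>^3 * Ta t) > 0"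
      using assms by (smt (verit) mult_pos_pos mult_nonneg_nonneg mult_pos_neg)
    then show ?thesis using assms unfolding dTa_def by (simp add: mult.assoc)
  qed
  have condh: "dTs t - mu * dTa t > 0" if "Ta t \<ge> 0" "Ts t - mu * Ta t < 0" for t
    unfolding dTs_def dTa_def
    by (rule hcond) (use that assms mupos K bs_pos in auto)
  have condTs: "dTs t > 0" if "Ta t \<ge> 0" "Ts t = 0" for t
  proof -
    have "ea * sB * \<bar>Ta t\<bar>^3 * Ta t \<ge> 0" using that assms by simp
    then show ?thesis using that assms bs0 unfolding dTs_def by (simp add: add_nonneg_pos)
  qed
  define G where "G t \<longleftrightarrow> Ta t \<ge> 0 \<and> Ts t - mu * Ta t \<ge> 0" for t
  have claim: "\<forall>t\<in>{tau0..s}. G t" if s: "tau0 \<le> s" "ereal s < tau" for s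
  proof (rule ccontr)
    assume "\<not> (\<forall>t\<in>{tau0..s}. G t)"
    define A where "A = {t\<in>{tau0..s}. \<not> G t}"
    have Ane: "A \<noteq> {}" using \<open>\<not> (\<forall>t\<in>{tau0..s}. G t)\<close> unfolding A_def by auto
    have bdd: "bdd_below A" unfolding A_def by (auto intro: bdd_belowI[of _ tau0])
    define r where "r = Inf A"
    have r1: "tau0 \<le> r" unfolding r_def using Ane by (intro cInf_greatest) (auto simp: A_def)
    have r2': "r \<le> s"
    proof -
      obtain x where "x \<in> A" using Ane by blast
      then have "r \<le> x" using bdd unfolding r_def by (intro cInf_lower)
      then show ?thesis using \<open>x \<in> A\<close> unfolding A_def by auto
    qed
    have before: "G t" if "t \<in> {tau0..<r}" for t
    proof (rule ccontr)
      assume "\<not> G t"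
      then have "t \<in> A" using that r2' unfolding A_def by auto
      then have "r \<le> t" using bdd unfolding r_def by (intro cInf_lower)
      then show False using that by auto
    qed
    have sr: "ereal r < tau" using r2' s(2) by (meson ereal_less_eq(3) le_less_trans)
    have G0: "G tau0" using E h0 unfolding G_def by auto
    have Gr: "G r"
    proof (cases "r = tau0")
      case True then show ?thesis using G0 by simp
    next
      case False
      then have lt: "tau0 < r" using r1 by simp
      have c: "continuous_on {tau0..r} Ta" "continuous_on {tau0..r} Ts"
        using contI[OF \<open>0 \<le> tau0\<close> sr] by auto
      have c2: "continuous_on {tau0..r} (\<lambda>t. Ts t - mu * Ta t)"
        using c by (intro continuous_intros)
      have "Ta r \<ge> 0" using ge_at_end[OF lt c(1)] before unfolding G_def by auto
      moreover have "Ts r - mu * Ta r \<ge> 0"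
        using ge_at_end[OF lt c2] before unfolding G_def by auto
      ultimately show ?thesis unfolding G_def by simp
    qed
    have rs: "r < s"
    proof (rule ccontr)
      assume "\<not> r < s"
      then have "r = s" using r2' by simp
      then have "\<forall>t\<in>{tau0..s}. G t" using before Gr by (metis atLeastAtMost_iff atLeastLessThan_iff order_less_le)
      then show False using Ane unfolding A_def by auto
    qed
    have r0: "0 \<le> r" using r1 \<open>0 \<le> tau0\<close> by simp
    have Tsr: "Ts r \<ge> 0" using Gr mupos unfolding G_def by (smt (verit) mult_nonneg_nonneg)
    obtain b where b: "r < b" "b \<le> s" "\<forall>t\<in>{r..b}. Ts t \<ge> 0"
    proof (cases "Ts r > 0")
      case True
      have "continuous_on {r..s} Ts" using contI[OF r0 s(2)] by simp
      then obtain d where d: "d > 0" "\<forall>x'\<in>{r..s}. dist x' r < d \<longrightarrow> dist (Ts x') (Ts r) < Ts r"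
        using True rs unfolding continuous_on_iff by (meson atLeastAtMost_iff less_imp_le order_refl)
      show ?thesis
      proof (rule that[of "min s (r + d/2)"])
        show "r < min s (r + d/2)" using rs d by simp
        show "min s (r + d/2) \<le> s" by simp
        show "\<forall>t\<in>{r..min s (r + d / 2)}. 0 \<le> Ts t"
        proof
          fix t assume t: "t \<in> {r..min s (r + d / 2)}"
          then have "dist t r < d" using d by (auto simp: dist_real_def)
          then have "dist (Ts t) (Ts r) < Ts r" using d t by auto
          then show "0 \<le> Ts t" by (auto simp: dist_real_def)
        qed
      qed
    next
      case False
      then have T0: "Ts r = 0" using Tsr by simp
      have "(Ts has_real_derivative dTs r) (at r within {r..s})" using derI[OF r0 s(2)] rs by auto
      moreover have "dTs r > 0" using condTs T0 Gr unfolding G_def by auto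
      ultimately obtain d where d: "d > 0" "\<forall>h>0. r + h \<in> {r..s} \<longrightarrow> h < d \<longrightarrow> Ts r < Ts (r + h)"
        using has_real_derivative_pos_inc_right by blast
      show ?thesis
      proof (rule that[of "min s (r + d/2)"])
        show "r < min s (r + d/2)" using rs d by simp
        show "min s (r + d/2) \<le> s" by simp
        show "\<forall>t\<in>{r..min s (r + d / 2)}. 0 \<le> Ts t"
        proof
          fix t assume t: "t \<in> {r..min s (r + d / 2)}"
          show "0 \<le> Ts t"
          proof (cases "t = r")
            case True then show ?thesis using T0 by simp
          next
            case False
            then have "t - r > 0" "r + (t - r) \<in> {r..s}" "t - r < d" using t d by auto
            then have "Ts r < Ts (r + (t - r))" using d(2) by blast
            then show ?thesis using T0 by simp
          qed
        qed
      qed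
    qed
    have bt: "ereal b < tau" using b(2) s(2) by (meson ereal_less_eq(3) le_less_trans)
    have dI: "(Ta has_real_derivative dTa t) (at t within {r..b}) \<and> (Ts has_real_derivative dTs t) (at t within {r..b})"
      if "t \<in> {r..b}" for t using derI[OF r0 bt that] .
    have Tapos: "\<forall>t\<in>{r..b}. Ta t \<ge> 0"
    proof (rule MP[of r b Ta dTa])
      show "r \<le> b" using b by simp
      show "\<And>t. t \<in> {r..b} \<Longrightarrow> (Ta has_real_derivative dTa t) (at t within {r..b})" using dI by blast
      show "\<And>t. t \<in> {r<..b} \<Longrightarrow> Ta t < 0 \<Longrightarrow> 0 < dTa t" using condTa b(3) by auto
      show "0 \<le> Ta r" using Gr unfolding G_def by simp
    qed
    have hpos: "\<forall>t\<in>{r..b}. Ts t - mu * Ta t \<ge> 0"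
    proof (rule MP[of r b "\<lambda>t. Ts t - mu * Ta t" "\<lambda>t. dTs t - mu * dTa t"])
      show "r \<le> b" using b by simp
      show "\<And>t. t \<in> {r..b} \<Longrightarrow> ((\<lambda>t. Ts t - mu * Ta t) has_real_derivative dTs t - mu * dTa t) (at t within {r..b})"
        using dI by (intro DERIV_diff DERIV_cmult) auto
      show "\<And>t. t \<in> {r<..b} \<Longrightarrow> Ts t - mu * Ta t < 0 \<Longrightarrow> 0 < dTs t - mu * dTa t"
        using condh Tapos by auto
      show "0 \<le> Ts r - mu * Ta r" using Gr unfolding G_def by simp
    qed
    have "b \<le> r" unfolding r_def
    proof (rule cInf_greatest[OF Ane])
      fix x assume x: "x \<in> A"
      show "b \<le> x"
      proof (rule ccontr)
        assume "\<not> b \<le> x"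
        then have "x \<in> {tau0..<r} \<or> x \<in> {r..b}" using x unfolding A_def by auto
        then have "G x" using before Tapos hpos unfolding G_def by auto
        then show False using x unfolding A_def by auto
      qed
    qed
    then show False using b by simp
  qed
  show ?thesis
  proof (intro exI conjI allI impI)
    show "root 4 2 < mu" "mu < mus" using mu1 by auto
    fix t assume t: "tau0 \<le> t \<and> ereal t < tau"
    then have "G t" using claim[of t] by auto
    then show "mu * Ta t \<le> Ts t" unfolding G_def by simp
  qed
qed

end
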